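(* For all $p\in[1,\infty)$, $$\sup_{z\in\{-1,1\}}\ \sup_{N\in\mathbb{N}}\ \mathbb{E}\Big[\sup_{n\in\{0,1,\dots,N\}}\exp\Big(pz\sum_{k=0}^{n-1}\alpha^N_k\Big)\Big]<\infty.$$
   Context: Standing setting: $T\in(0,\infty)$; $(\Omega,\mathcal{F},\mathbb{P})$ with normal filtration $(\mathcal{F}_t)_{t\in[0,T]}$; $d,m\in\mathbb{N}$; $W$ an $m$-dimensional standard $(\mathcal{F}_t)$-Brownian motion; $\xi$ $\mathcal{F}_0$-measurable in $\mathbb{R}^d$ with all moments finite. $\|\cdot\|$ Euclidean/operator norm. $\mu\colon\mathbb{R}^d\to\mathbb{R}^d$ is $C^1$, $\sigma\colon\mathbb{R}^d\to\mathbb{R}^{d\times m}$, and there is $c\in(0,\infty)$ with $\|\mu'(x)\|\le c(1+\|x\|^c)$, $\|\sigma(x)-\sigma(y)\|\le c\|x-y\|$, $\langle x-y,\mu(x)-\mu(y)\rangle\le c\|x-y\|^2$. $\Delta W^N_n:=W_{(n+1)T/N}-W_{nT/N}$; tamed Euler scheme $Y^N_0=\xi$, $Y^N_{n+1}=Y^N_n+\frac{(T/N)\mu(Y^N_n)}{1+(T/N)\|\mu(Y^N_n)\|}+\sigma(Y^N_n)\Delta W^N_n$. $\alpha^N_n:=\mathbf{1}_{\{\|Y^N_n\|\ge1\}}\big\langle\frac{Y^N_n}{\|Y^N_n\|},\frac{\sigma(Y^N_n)}{\|Y^N_n\|}\Delta W^N_n\big\rangle$ (equal to $0$ when $\|Y^N_n\|<1$)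 for $n\in\{0,\dots,N-1\}$; empty sums are $0$. *)

theory Defs
  imports "HOL-Probability.Probability"
begin

definition normal_filtration ::
  "'a measure \<Rightarrow> real \<Rightarrow> (real \<Rightarrow> 'a measure) \<Rightarrow> bool" where
  "normal_filtration M T F \<longleftrightarrow>
     (\<forall>t\<in>{0..T}. space (F t) = space M \<and> sets (F t) \<subseteq> sets M) \<and>
     (\<forall>s t. 0 \<le> s \<longrightarrow> s \<le> t \<longrightarrow> t \<le> T \<longrightarrow> sets (F s) \<subseteq> sets (F t)) \<and>
     (\<forall>A B. B \<in> null_sets M \<longrightarrow> A \<subseteq> B \<longrightarrow> A \<in> sets (F 0)) \<and>
     (\<forall>t\<in>{0..<T}. sets (F t) = (\<Inter>s\<in>{t<..T}. sets (F s)))"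

definition std_brownian_motion ::
  "'a measure \<Rightarrow> real \<Rightarrow> (real \<Rightarrow> 'a measure) \<Rightarrow> (real \<Rightarrow> 'a \<Rightarrow> real^'m::finite) \<Rightarrow> bool" where
  "std_brownian_motion M T F W \<longleftrightarrow>
     (AE \<omega> in M. W 0 \<omega> = 0) \<and>
     (AE \<omega> in M. continuous_on {0..T} (\<lambda>t. W t \<omega>)) \<and>
     (\<forall>t\<in>{0..T}. W t \<in> borel_measurable (F t)) \<and>
     (\<forall>s t. 0 \<le> s \<longrightarrow> s < t \<longrightarrow> t \<le> T \<longrightarrow>
        distributed M lborel (\<lambda>\<omega>. W t \<omega> - W s \<omega>)
          (\<lambda>x. ennreal (\<Prod>i\<in>UNIV. normal_density 0 (sqrt (t - s)) (x $ i))) \<and>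
        (\<forall>A\<in>sets (F s). \<forall>B\<in>sets borel.
           measure M (A \<inter> ((\<lambda>\<omega>. W t \<omega> - W s \<omega>) -` B \<inter> space M)) =
           measure M A * measure M ((\<lambda>\<omega>. W t \<omega> - W s \<omega>) -` B \<inter> space M)))"

definition dW :: "real \<Rightarrow> nat \<Rightarrow> (real \<Rightarrow> 'a \<Rightarrow> real^'m) \<Rightarrow> nat \<Rightarrow> 'a \<Rightarrow> real^'m" where
  "dW T N W n \<omega> = W (real (Suc n) * T / real N) \<omega> - W (real n * T / real N) \<omega>"

text \<open>Tamed Euler scheme Y^N_n (matrices d\<times>m are real^'m^'d).\<close>
fun tamed_euler ::
  "real \<Rightarrow> nat \<Rightarrow> (real^'d \<Rightarrow> real^'d) \<Rightarrow> (real^'d \<Rightarrow> real^'m^'d)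
   \<Rightarrow> (real \<Rightarrow> 'a \<Rightarrow> real^'m) \<Rightarrow> ('a \<Rightarrow> real^'d) \<Rightarrow> nat \<Rightarrow> 'a \<Rightarrow> real^'d" where
  "tamed_euler T N \<mu> \<sigma> W \<xi> 0 \<omega> = \<xi> \<omega>"
| "tamed_euler T N \<mu> \<sigma> W \<xi> (Suc n) \<omega> =
     (let y = tamed_euler T N \<mu> \<sigma> W \<xi> n \<omega> in
      y + ((T / real N) / (1 + (T / real N) * norm (\<mu> y))) *\<^sub>R \<mu> y
        + \<sigma> y *v dW T N W n \<omega>)"

definition alpha ::
  "real \<Rightarrow> nat \<Rightarrow> (real^'d \<Rightarrow> real^'d) \<Rightarrow> (real^'d \<Rightarrow> real^'m^'d)
   \<Rightarrow> (real \<Rightarrow> 'a \<Rightarrow> real^'m) \<Rightarrow> ('a \<Rightarrow> real^'d) \<Rightarrow> nat \<Rightarrow> 'a \<Rightarrow> real" where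
  "alpha T N \<mu> \<sigma> W \<xi> n \<omega> =
     (let y = tamed_euler T N \<mu> \<sigma> W \<xi> n \<omega> in
      if norm y \<ge> 1
      then inner (y /\<^sub>R norm y) (((1 / norm y) *\<^sub>R \<sigma> y) *v dW T N W n \<omega>)
      else 0)"

end

theory Submission
  imports Defs
begin


lemma gauss1:
  fixes a s :: real assumes s: "0 < s"
  shows "(\<integral>\<^sup>+t. ennreal (exp (a * t) * normal_density 0 s t) \<partial>lborel) = ennreal (exp (a\<^sup>2 * s\<^sup>2 / 2))"
proof -
  have eq: "exp (a * t) * normal_density 0 s t = exp (a\<^sup>2 * s\<^sup>2 / 2) * normal_density (a * s\<^sup>2) s t" for t
  proof -
    have "a * t + (-(t^2) / (2 * s^2)) = a^2 * s^2 / 2 + (-((t - a * s^2)^2) / (2 * s^2))"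
      using s by (simp add: field_simps power2_eq_square)
    then have "exp (a * t) * exp (-(t^2) / (2 * s^2)) = exp (a^2 * s^2 / 2) * exp (-((t - a * s^2)^2) / (2 * s^2))"
      by (metis exp_add)
    then show ?thesis unfolding normal_density_def by (simp add: mult_ac)
  qed
  have "(\<integral>\<^sup>+t. ennreal (exp (a * t) * normal_density 0 s t) \<partial>lborel)
     = (\<integral>\<^sup>+t. ennreal (exp (a\<^sup>2 * s\<^sup>2 / 2)) * ennreal (normal_density (a * s\<^sup>2) s t) \<partial>lborel)"
    by (simp add: eq ennreal_mult)
  also have "\<dots> = ennreal (exp (a\<^sup>2 * s\<^sup>2 / 2)) * (\<integral>\<^sup>+t. ennreal (normal_density (a * s\<^sup>2) s t) \<partial>lborel)"
    by (rule nn_integral_cmult) simp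
  also have "(\<integral>\<^sup>+t. ennreal (normal_density (a * s\<^sup>2) s t) \<partial>lborel) = 1"
    using s by (subst nn_integral_eq_integral) auto
  finally show ?thesis by simp
qed

lemma gaussN:
  fixes w :: "'a::euclidean_space" and s :: real assumes s: "0 < s"
  shows "(\<integral>\<^sup>+x. ennreal (exp (inner w x) * (\<Prod>b\<in>Basis. normal_density 0 s (x \<bullet> b))) \<partial>lborel)
     = ennreal (exp ((norm w)\<^sup>2 * s\<^sup>2 / 2))"
proof -
  have "(\<integral>\<^sup>+x. ennreal (exp (inner w x) * (\<Prod>b\<in>Basis. normal_density 0 s (x \<bullet> b))) \<partial>lborel)
     = (\<integral>\<^sup>+x. (\<Prod>b\<in>Basis. (\<lambda>b t. ennreal (exp ((w \<bullet> b) * t) * normal_density 0 s t)) b (x \<bullet> b)) \<partial>lborel)"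
  proof (rule nn_integral_cong)
    fix x :: 'a
    have "exp (inner w x) = (\<Prod>b\<in>Basis. exp ((w \<bullet> b) * (x \<bullet> b)))"
      by (subst euclidean_inner) (simp add: exp_sum)
    then show "ennreal (exp (inner w x) * (\<Prod>b\<in>Basis. normal_density 0 s (x \<bullet> b))) =
      (\<Prod>b\<in>Basis. (\<lambda>b t. ennreal (exp ((w \<bullet> b) * t) * normal_density 0 s t)) b (x \<bullet> b))"
      by (simp add: prod.distrib[symmetric] prod_ennreal)
  qed
  also have "\<dots> = (\<Prod>b\<in>Basis. (\<integral>\<^sup>+t. ennreal (exp ((w \<bullet> b) * t) * normal_density 0 s t) \<partial>lborel))"
    by (rule nn_integral_lborel_prod) auto
  also have "\<dots> = (\<Prod>b\<in>Basis. ennreal (exp ((w \<bullet> b)\<^sup>2 * s\<^sup>2 / 2)))"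
    using gauss1[OF s] by simp
  also have "\<dots> = ennreal (exp ((\<Sum>b\<in>Basis. (w \<bullet> b)\<^sup>2) * s\<^sup>2 / 2))"
    by (simp add: prod_ennreal exp_sum sum_divide_distrib sum_distrib_right)
  also have "(\<Sum>b\<in>Basis. (w \<bullet> b)\<^sup>2) = (norm w)\<^sup>2"
    using power2_norm_eq_inner[of w] euclidean_inner[of w w] by (simp add: power2_eq_square)
  finally show ?thesis .
qed

lemma prod_vec_basis:
  fixes x :: "real^'m" and f :: "real \<Rightarrow> real"
  shows "(\<Prod>i\<in>UNIV. f (x $ i)) = (\<Prod>b\<in>Basis. f (x \<bullet> b))"
proof -
  have "(\<Prod>b\<in>Basis. f (x \<bullet> b)) = (\<Prod>b\<in>(\<lambda>i. axis i (1::real)) ` UNIV. f (x \<bullet> b))"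
    unfolding Basis_vec_def by (auto intro!: prod.cong)
  also have "\<dots> = (\<Prod>i\<in>UNIV. f (x \<bullet> axis i 1))"
    by (subst prod.reindex) (auto simp: inj_on_def axis_eq_axis)
  finally show ?thesis by (simp add: inner_axis)
qed




lemma gauss_vec:
  fixes w :: "real^'m" and s :: real assumes s: "0 < s"
  shows "(\<integral>\<^sup>+x. ennreal (\<Prod>i\<in>UNIV. normal_density 0 s (x$i)) * ennreal (exp (inner w x)) \<partial>lborel)
     = ennreal (exp ((norm w)\<^sup>2 * s\<^sup>2 / 2))"
  unfolding prod_vec_basis[of "normal_density 0 s"]
  using gaussN[OF s, of w]
  by (simp add: ennreal_mult'[symmetric] mult.commute)

lemma indep_exp:
  fixes M Fs :: "'a measure" and D :: "'a \<Rightarrow> real^'m" and s :: real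
    and G :: "'a \<Rightarrow> ennreal" and w :: "'a \<Rightarrow> real^'m"
  assumes P: "prob_space M" and sub: "sets Fs \<subseteq> sets M" "space Fs = space M"
   and dist: "distributed M lborel D (\<lambda>x. ennreal (\<Prod>i\<in>UNIV. normal_density 0 s (x$i)))"
   and s: "0 < s"
   and ind: "\<forall>A\<in>sets Fs. \<forall>B\<in>sets borel. measure M (A \<inter> (D -` B \<inter> space M)) = measure M A * measure M (D -` B \<inter> space M)"
   and G: "G \<in> borel_measurable Fs" and w: "w \<in> borel_measurable Fs"
  shows "(\<integral>\<^sup>+\<omega>. G \<omega> * ennreal (exp (inner (w \<omega>) (D \<omega>))) \<partial>M)
       = (\<integral>\<^sup>+\<omega>. G \<omega> * ennreal (exp ((norm (w \<omega>))\<^sup>2 * s\<^sup>2 / 2)) \<partial>M)"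
proof -
  interpret P: prob_space M by fact
  have subalg: "subalgebra M Fs" unfolding subalgebra_def using sub by auto
  define Ms where "Ms = restr_to_subalg M Fs"
  define N where "N = distr M lborel D"
  let ?f = "\<lambda>x::real^'m. ennreal (\<Prod>i\<in>UNIV. normal_density 0 s (x$i))"
  have Dm: "D \<in> measurable M lborel" using dist by (simp add: distributed_def)
  have Nd: "N = density lborel ?f" using dist by (simp add: distributed_def N_def)
  have fm: "?f \<in> borel_measurable lborel" using dist by (simp add: distributed_def)
  interpret Ms: prob_space Ms unfolding Ms_def by (rule prob_space_restr_to_subalg[OF subalg P])
  interpret N: prob_space N unfolding N_def by (rule P.prob_space_distr[OF Dm])
  interpret MN: pair_sigma_finite Ms N ..
  have setsMs: "sets Ms = sets Fs" unfolding Ms_def by (rule sets_restr_to_subalg[OF subalg])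
  have spaceMs: "space Ms = space M" unfolding Ms_def by (rule space_restr_to_subalg)
  have setsN: "sets N = sets borel" unfolding N_def by simp
  have idm: "(\<lambda>\<omega>. \<omega>) \<in> measurable M Ms"
  proof (rule measurableI)
    fix x assume "x \<in> space M" then show "x \<in> space Ms" using spaceMs by simp
  next
    fix A assume "A \<in> sets Ms"
    then have "A \<in> sets M" using setsMs sub by auto
    moreover have "A \<subseteq> space M" using \<open>A \<in> sets Ms\<close> sets.sets_into_space spaceMs by blast
    ultimately show "(\<lambda>\<omega>. \<omega>) -` A \<inter> space M \<in> sets M" by (simp add: Int_absorb2)
  qed
  have DmN: "D \<in> measurable M N" using Dm by (simp add: measurable_cong_sets[OF refl setsN])
  have pm: "(\<lambda>\<omega>. (\<omega>, D \<omega>)) \<in> measurable M (Ms \<Otimes>\<^sub>M N)"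
    by (rule measurable_Pair[OF idm DmN])
  have pair: "Ms \<Otimes>\<^sub>M N = distr M (Ms \<Otimes>\<^sub>M N) (\<lambda>\<omega>. (\<omega>, D \<omega>))"
  proof (rule pair_measure_eqI)
    show "sigma_finite_measure Ms" "sigma_finite_measure N" by unfold_locales
    show "sets (Ms \<Otimes>\<^sub>M N) = sets (distr M (Ms \<Otimes>\<^sub>M N) (\<lambda>\<omega>. (\<omega>, D \<omega>)))" by simp
  next
    fix A B assume A: "A \<in> sets Ms" and B: "B \<in> sets N"
    have AF: "A \<in> sets Fs" using A setsMs by simp
    have AM: "A \<in> sets M" using AF sub by auto
    have AS: "A \<subseteq> space M" using AM sets.sets_into_space by blast
    have Bb: "B \<in> sets borel" using B setsN by simp
    have "emeasure (distr M (Ms \<Otimes>\<^sub>M N) (\<lambda>\<omega>. (\<omega>, D \<omega>))) (A \<times> B)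
        = emeasure M ((\<lambda>\<omega>. (\<omega>, D \<omega>)) -` (A \<times> B) \<inter> space M)"
      using A B by (intro emeasure_distr[OF pm]) auto
    also have "(\<lambda>\<omega>. (\<omega>, D \<omega>)) -` (A \<times> B) \<inter> space M = A \<inter> (D -` B \<inter> space M)"
      using AS by auto
    also have "emeasure M (A \<inter> (D -` B \<inter> space M)) = ennreal (measure M A * measure M (D -` B \<inter> space M))"
      using ind AF Bb by (simp add: P.emeasure_eq_measure)
    also have "\<dots> = emeasure Ms A * emeasure N B"
    proof -
      have "emeasure Ms A = emeasure M A" unfolding Ms_def using emeasure_restr_to_subalg[OF subalg AF] .
      moreover have "emeasure N B = emeasure M (D -` B \<inter> space M)"
        unfolding N_def using Bb Dm by (simp add: emeasure_distr)
      ultimately show ?thesis by (simp add: P.emeasure_eq_measure ennreal_mult)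
    qed
    finally show "emeasure Ms A * emeasure N B = emeasure (distr M (Ms \<Otimes>\<^sub>M N) (\<lambda>\<omega>. (\<omega>, D \<omega>))) (A \<times> B)" by simp
  qed
  have GMs: "G \<in> borel_measurable Ms" unfolding Ms_def by (rule measurable_in_subalg[OF subalg G])
  have wMs: "w \<in> borel_measurable Ms" unfolding Ms_def by (rule measurable_in_subalg[OF subalg w])
  let ?H = "\<lambda>p. G (fst p) * ennreal (exp (inner (w (fst p)) (snd p)))"
  have Hm: "?H \<in> borel_measurable (Ms \<Otimes>\<^sub>M N)"
  proof -
    have "(\<lambda>p. snd p) \<in> measurable (Ms \<Otimes>\<^sub>M N) borel"
      using measurable_snd by (simp add: measurable_cong_sets[OF refl setsN, symmetric])
    then show ?thesis using GMs wMs by measurable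
  qed
  have "(\<integral>\<^sup>+\<omega>. G \<omega> * ennreal (exp (inner (w \<omega>) (D \<omega>))) \<partial>M) = (\<integral>\<^sup>+\<omega>. ?H (\<omega>, D \<omega>) \<partial>M)"
    by simp
  also have "\<dots> = (\<integral>\<^sup>+p. ?H p \<partial>(distr M (Ms \<Otimes>\<^sub>M N) (\<lambda>\<omega>. (\<omega>, D \<omega>))))"
    using nn_integral_distr[OF pm, of ?H] Hm by simp
  also have "\<dots> = (\<integral>\<^sup>+p. ?H p \<partial>(Ms \<Otimes>\<^sub>M N))" by (simp add: pair[symmetric])
  also have "\<dots> = (\<integral>\<^sup>+\<omega>. (\<integral>\<^sup>+x. ?H (\<omega>, x) \<partial>N) \<partial>Ms)"
    using N.nn_integral_fst[OF Hm] by simp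
  also have "\<dots> = (\<integral>\<^sup>+\<omega>. G \<omega> * ennreal (exp ((norm (w \<omega>))\<^sup>2 * s\<^sup>2 / 2)) \<partial>Ms)"
  proof (rule nn_integral_cong)
    fix \<omega>
    have em: "(\<lambda>x. ennreal (exp (inner (w \<omega>) x))) \<in> borel_measurable lborel" by measurable
    have "(\<integral>\<^sup>+x. ?H (\<omega>, x) \<partial>N) = G \<omega> * (\<integral>\<^sup>+x. ennreal (exp (inner (w \<omega>) x)) \<partial>N)"
      using em nn_integral_cmult[of "\<lambda>x. ennreal (exp (inner (w \<omega>) x))" N "G \<omega>"]
      by (simp add: measurable_cong_sets[OF setsN refl])
    also have "(\<integral>\<^sup>+x. ennreal (exp (inner (w \<omega>) x)) \<partial>N) = ennreal (exp ((norm (w \<omega>))\<^sup>2 * s\<^sup>2 / 2))"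
      unfolding Nd using fm em by (simp add: nn_integral_density gauss_vec[OF s])
    finally show "(\<integral>\<^sup>+x. ?H (\<omega>, x) \<partial>N) = G \<omega> * ennreal (exp ((norm (w \<omega>))\<^sup>2 * s\<^sup>2 / 2))" .
  qed
  also have "\<dots> = (\<integral>\<^sup>+\<omega>. G \<omega> * ennreal (exp ((norm (w \<omega>))\<^sup>2 * s\<^sup>2 / 2)) \<partial>M)"
  proof -
    have "(\<lambda>x. norm (w x)) \<in> borel_measurable Fs" using w by measurable
    then have "(\<lambda>x. ennreal (exp ((norm (w x))\<^sup>2 * s\<^sup>2 / 2))) \<in> borel_measurable Fs" by measurable
    then show ?thesis
      unfolding Ms_def using G by (intro nn_integral_subalgebra2[OF subalg]) measurable
  qed
  finally show ?thesis .
qed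




lemma measurable_lift:
  assumes "sets A \<subseteq> sets B" "space A = space B" "f \<in> measurable A C"
  shows "f \<in> measurable B C"
  using assms by (auto simp: measurable_def)

lemma sigma_cont:
  fixes \<sigma> :: "real^'d::finite \<Rightarrow> real^'m::finite^'d" and c :: real
  assumes c: "0 < c" and L: "\<And>x y. onorm (\<lambda>v. (\<sigma> x - \<sigma> y) *v v) \<le> c * norm (x - y)"
  shows "continuous_on UNIV \<sigma>"
proof -
  have col: "continuous_on UNIV (\<lambda>y. \<sigma> y *v axis j 1)" for j
  proof -
    have "lipschitz_on c UNIV (\<lambda>y. \<sigma> y *v axis j 1)"
    proof (rule lipschitz_onI)
      fix x y :: "real^'d"
      have "dist (\<sigma> x *v axis j 1) (\<sigma> y *v axis j 1) = norm ((\<sigma> x - \<sigma> y) *v axis j 1)"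
        by (simp add: dist_norm matrix_vector_mult_diff_rdistrib)
      also have "\<dots> \<le> onorm (\<lambda>v. (\<sigma> x - \<sigma> y) *v v) * norm (axis j (1::real))"
        by (rule onorm) simp
      also have "\<dots> \<le> c * dist x y" using L[of x y] by (simp add: dist_norm)
      finally show "dist (\<sigma> x *v axis j 1) (\<sigma> y *v axis j 1) \<le> c * dist x y" .
    qed (use c in simp)
    then show ?thesis by (rule lipschitz_on_continuous_on)
  qed
  have eq: "\<sigma> = (\<lambda>y. \<chi> i j. (\<sigma> y *v axis j 1) $ i)"
    by (auto simp: fun_eq_iff vec_eq_iff matrix_vector_mult_def axis_def if_distrib cong: if_cong)
  show ?thesis
    by (subst eq) (intro continuous_on_vec_lambda continuous_on_component col)
qed

lemma mv_cont: "continuous_on UNIV (\<lambda>x. fst x *v (snd x :: real^'m::finite) :: real^'d::finite)"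
  unfolding matrix_vector_mult_def
  by (intro continuous_on_vec_lambda continuous_on_sum continuous_on_mult continuous_on_component
      continuous_on_fst continuous_on_snd continuous_on_id)




lemma Max_Suc_atMost:
  fixes y :: "nat \<Rightarrow> real"
  shows "Max (y ` {0..Suc n}) = max (Max (y ` {0..n})) (y (Suc n))"
proof -
  have "{0..Suc n} = insert (Suc n) {0..n}" by auto
  then show ?thesis by (simp add: max.commute)
qed

lemma Max_ge_elem: "k \<le> n \<Longrightarrow> (y::nat\<Rightarrow>real) k \<le> Max (y ` {0..n})"
  by (intro Max_ge) auto

lemma doob_det_aux:
  fixes y :: "nat \<Rightarrow> real"
  defines "m \<equiv> \<lambda>n. Max (y ` {0..n})"
  shows "(\<Sum>k<n. m k * (y (Suc k) - y k)) \<le> m n * y n - (m n)^2 / 2"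
proof (induction n)
  case 0
  then show ?case by (simp add: m_def power2_eq_square)
next
  case (Suc n)
  have mS: "m (Suc n) = max (m n) (y (Suc n))" unfolding m_def by (rule Max_Suc_atMost)
  have myn: "y n \<le> m n" unfolding m_def by (rule Max_ge_elem) simp
  show ?case
  proof (cases "y (Suc n) \<le> m n")
    case True
    then have "m (Suc n) = m n" using mS by simp
    then show ?thesis using Suc.IH by (simp add: algebra_simps)
  next
    case False
    then have e: "m (Suc n) = y (Suc n)" using mS by simp
    have sq: "0 \<le> (y (Suc n) - m n)^2" by simp
    have "m n * y (Suc n) \<le> (y (Suc n))^2/2 + (m n)^2/2"
      using sq unfolding power2_diff by (simp add: mult.commute)
    then show ?thesis using Suc.IH e by (simp add: algebra_simps power2_eq_square)
  qed
qed

lemma doob_det: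
  fixes y :: "nat \<Rightarrow> real"
  assumes nn: "\<And>k. 0 \<le> y k"
  defines "m \<equiv> \<lambda>n. Max (y ` {0..n})"
  shows "(m n)^2 + 4 * (\<Sum>k<n. m k * y (Suc k)) \<le> 4 * (y n)^2 + 4 * (\<Sum>k<n. m k * y k)"
proof -
  have A: "(\<Sum>k<n. m k * (y (Suc k) - y k)) \<le> m n * y n - (m n)^2 / 2"
    unfolding m_def by (rule doob_det_aux)
  have "m n * y n \<le> (m n)^2/4 + (y n)^2"
  proof -
    have "0 \<le> (m n / 2 - y n)^2" by simp
    then show ?thesis unfolding power2_diff by (simp add: power_divide mult.commute)
  qed
  moreover have "(\<Sum>k<n. m k * (y (Suc k) - y k)) = (\<Sum>k<n. m k * y (Suc k)) - (\<Sum>k<n. m k * y k)"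
    by (simp add: algebra_simps sum_subtractf)
  ultimately show ?thesis using A by linarith
qed




locale tam =
  fixes M :: "'a measure" and T c :: real and F :: "real \<Rightarrow> 'a measure"
    and W :: "real \<Rightarrow> 'a \<Rightarrow> real^'m::finite" and \<xi> :: "'a \<Rightarrow> real^'d::finite"
    and \<mu> :: "real^'d \<Rightarrow> real^'d" and \<mu>' :: "real^'d \<Rightarrow> ((real^'d) \<Rightarrow>\<^sub>L (real^'d))"
    and \<sigma> :: "real^'d \<Rightarrow> real^'m^'d" and N :: nat
  assumes P: "prob_space M" and Tpos: "0 < T"
    and NF: "normal_filtration M T F"
    and BM: "std_brownian_motion M T F W"
    and xim: "\<xi> \<in> borel_measurable (F 0)"
    and mud: "\<And>x. (\<mu> has_derivative blinfun_apply (\<mu>' x)) (at x)"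
    and cpos: "0 < c"
    and sigL: "\<And>x y. onorm (\<lambda>v. (\<sigma> x - \<sigma> y) *v v) \<le> c * norm (x - y)"
    and Npos: "0 < N"
begin

interpretation prob_space M by (rule P)

definition tk :: "nat \<Rightarrow> real" where "tk k = real k * T / real N"
definition FF :: "nat \<Rightarrow> 'a measure" where "FF k = F (tk k)"
definition Y where "Y k = tamed_euler T N \<mu> \<sigma> W \<xi> k"
definition D where "D k = dW T N W k"
definition vv :: "nat \<Rightarrow> 'a \<Rightarrow> real^'m" where
  "vv k \<omega> = (let y = Y k \<omega> in if 1 \<le> norm y then (1 / (norm y)^2) *\<^sub>R (y v* \<sigma> y) else 0)"
definition K :: real where "K = onorm (\<lambda>v. \<sigma> 0 *v v) + c"

lemma tk_nonneg: "0 \<le> tk k" unfolding tk_def using Tpos by simp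
lemma tk_le: "k \<le> N \<Longrightarrow> tk k \<le> T"
  unfolding tk_def using Tpos Npos by (simp add: divide_le_eq mult_right_mono)
lemma tk_mono: "j \<le> k \<Longrightarrow> tk j \<le> tk k"
  unfolding tk_def using Tpos Npos by (simp add: divide_right_mono mult_right_mono)
lemma tk_Suc: "tk (Suc k) - tk k = T / real N"
  unfolding tk_def by (simp add: add_divide_distrib distrib_right)
lemma tk_less: "tk k < tk (Suc k)"
proof -
  have "0 < T / real N" using Tpos Npos by simp
  then show ?thesis using tk_Suc[of k] by linarith
qed

lemma NF1: "\<forall>t\<in>{0..T}. space (F t) = space M \<and> sets (F t) \<subseteq> sets M"
  using NF unfolding normal_filtration_def by (rule conjunct1)
lemma NF2: "\<forall>s t. 0 \<le> s \<longrightarrow> s \<le> t \<longrightarrow> t \<le> T \<longrightarrow> sets (F s) \<subseteq> sets (F t)"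
  using NF unfolding normal_filtration_def by (rule conjunct1[OF conjunct2])

lemma FF_sub: "k \<le> N \<Longrightarrow> sets (FF k) \<subseteq> sets M \<and> space (FF k) = space M"
  using NF1 tk_nonneg[of k] tk_le[of k] unfolding FF_def by simp

lemma FF_mono: "j \<le> k \<Longrightarrow> k \<le> N \<Longrightarrow> sets (FF j) \<subseteq> sets (FF k)"
  using NF2 tk_nonneg[of j] tk_le[of k] tk_mono[of j k] unfolding FF_def by blast

lemma FF_space: "j \<le> N \<Longrightarrow> k \<le> N \<Longrightarrow> space (FF j) = space (FF k)"
  using FF_sub by auto

lemma FF_lift: "j \<le> k \<Longrightarrow> k \<le> N \<Longrightarrow> f \<in> measurable (FF j) C \<Longrightarrow> f \<in> measurable (FF k) C"
  by (rule measurable_lift[OF FF_mono FF_space]) auto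

lemma FF_M: "k \<le> N \<Longrightarrow> f \<in> measurable (FF k) C \<Longrightarrow> f \<in> measurable M C"
  by (rule measurable_lift[of "FF k"]) (use FF_sub in auto)

lemma W_meas: "k \<le> N \<Longrightarrow> W (tk k) \<in> borel_measurable (FF k)"
proof -
  assume k: "k \<le> N"
  have "\<forall>t\<in>{0..T}. W t \<in> borel_measurable (F t)" using BM unfolding std_brownian_motion_def
    by (rule conjunct1[OF conjunct2[OF conjunct2]])
  then show ?thesis using tk_nonneg[of k] tk_le[OF k] unfolding FF_def by simp
qed

lemma D_eq: "D k = (\<lambda>\<omega>. W (tk (Suc k)) \<omega> - W (tk k) \<omega>)"
  unfolding D_def dW_def tk_def by (simp add: fun_eq_iff)

lemma D_meas: "k < N \<Longrightarrow> D k \<in> borel_measurable (FF (Suc k))"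
proof -
  assume k: "k < N"
  have "W (tk k) \<in> borel_measurable (FF (Suc k))"
    using k by (rule_tac FF_lift[OF _ _ W_meas]) auto
  moreover have "W (tk (Suc k)) \<in> borel_measurable (FF (Suc k))" using k W_meas by simp
  ultimately show ?thesis unfolding D_eq by measurable
qed

lemma mu_cont: "continuous_on UNIV \<mu>"
  using mud by (intro continuous_at_imp_continuous_on ballI has_derivative_continuous) auto

lemma sig_cont: "continuous_on UNIV \<sigma>" by (rule sigma_cont[OF cpos sigL])

definition Phi :: "real^'d \<Rightarrow> real^'m \<Rightarrow> real^'d" where
  "Phi y d = y + ((T / real N) / (1 + (T / real N) * norm (\<mu> y))) *\<^sub>R \<mu> y + \<sigma> y *v d"

lemma Phi_cont: "continuous_on UNIV (\<lambda>x. Phi (fst x) (snd x))"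
proof -
  have c1: "continuous_on UNIV (\<lambda>x::(real^'d) \<times> (real^'m). \<mu> (fst x))"
    by (rule continuous_on_compose2[OF mu_cont continuous_on_fst[OF continuous_on_id]]) simp
  have c2: "continuous_on UNIV (\<lambda>x::(real^'d) \<times> (real^'m). \<sigma> (fst x))"
    by (rule continuous_on_compose2[OF sig_cont continuous_on_fst[OF continuous_on_id]]) simp
  have c3: "continuous_on UNIV (\<lambda>x::(real^'d) \<times> (real^'m). \<sigma> (fst x) *v snd x)"
    using continuous_on_compose2[OF mv_cont continuous_on_Pair[OF c2 continuous_on_snd[OF continuous_on_id]]]
    by simp
  have pos: "1 + (T / real N) * norm (\<mu> y) \<noteq> 0" for y
  proof -
    have "0 \<le> (T / real N) * norm (\<mu> y)" using Tpos by simp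
    then show ?thesis by linarith
  qed
  show ?thesis unfolding Phi_def
    by (intro continuous_on_add continuous_on_scaleR continuous_on_divide continuous_on_mult
        continuous_on_norm continuous_on_const continuous_on_fst continuous_on_id c1 c3) (use pos in auto)
qed

lemma Y_Suc: "Y (Suc k) \<omega> = Phi (Y k \<omega>) (D k \<omega>)"
  unfolding Y_def D_def Phi_def by (simp add: Let_def)

lemma Y_meas: "k \<le> N \<Longrightarrow> Y k \<in> borel_measurable (FF k)"
proof (induction k)
  case 0
  have "Y 0 = \<xi>" by (simp add: Y_def fun_eq_iff)
  then show ?case using xim by (simp add: FF_def tk_def)
next
  case (Suc k)
  have a: "Y k \<in> borel_measurable (FF (Suc k))"
    using Suc by (rule_tac FF_lift[of k]) auto
  have b: "D k \<in> borel_measurable (FF (Suc k))" using Suc D_meas by simp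
  have "(\<lambda>\<omega>. Phi (Y k \<omega>) (D k \<omega>)) \<in> borel_measurable (FF (Suc k))"
    by (rule borel_measurable_continuous_Pair[OF a b Phi_cont])
  then show ?case by (simp add: Y_Suc[abs_def])
qed

end



lemma vm_cont: "continuous_on UNIV (\<lambda>x. (fst x :: real^'d::finite) v* (snd x :: real^'m::finite^'d))"
  unfolding vector_matrix_mult_def
  by (intro continuous_on_vec_lambda continuous_on_sum continuous_on_mult continuous_on_component
      continuous_on_fst continuous_on_snd continuous_on_id)

context tam begin

interpretation prob_space M by (rule P)

lemma alpha_eq: "alpha T N \<mu> \<sigma> W \<xi> k \<omega> = inner (vv k \<omega>) (D k \<omega>)"
proof -
  let ?y = "Y k \<omega>" and ?d = "D k \<omega>"
  have "inner (?y /\<^sub>R norm ?y) (((1 / norm ?y) *\<^sub>R \<sigma> ?y) *v ?d)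
      = (1 / (norm ?y)^2) * inner ?y (\<sigma> ?y *v ?d)"
    by (simp add: scaleR_matrix_vector_assoc[symmetric] power2_eq_square divide_inverse)
  also have "\<dots> = inner ((1 / (norm ?y)^2) *\<^sub>R (?y v* \<sigma> ?y)) ?d"
    by (simp add: dot_lmul_matrix)
  finally show ?thesis
    unfolding alpha_def vv_def Y_def[symmetric] D_def[symmetric] by (simp add: Let_def)
qed

lemma K_nonneg: "0 \<le> K"
  unfolding K_def using cpos onorm_pos_le[OF matrix_vector_mul_bounded_linear[of "\<sigma> 0"]] by linarith

lemma vv_bound: "norm (vv k \<omega>) \<le> K"
proof (cases "1 \<le> norm (Y k \<omega>)")
  case False then show ?thesis using K_nonneg by (simp add: vv_def Let_def)
next
  case True
  let ?y = "Y k \<omega>"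
  define u where "u = ?y v* \<sigma> ?y"
  define o0 where "o0 = onorm (\<lambda>v. \<sigma> 0 *v v)"
  have o0: "0 \<le> o0" unfolding o0_def by (rule onorm_pos_le[OF matrix_vector_mul_bounded_linear])
  have Au: "norm (\<sigma> ?y *v x) \<le> (o0 + c * norm ?y) * norm x" for x
  proof -
    have "\<sigma> ?y *v x = \<sigma> 0 *v x + (\<sigma> ?y - \<sigma> 0) *v x" by (simp add: matrix_vector_mult_diff_rdistrib)
    then have "norm (\<sigma> ?y *v x) \<le> norm (\<sigma> 0 *v x) + norm ((\<sigma> ?y - \<sigma> 0) *v x)"
      by (metis norm_triangle_ineq)
    also have "norm (\<sigma> 0 *v x) \<le> o0 * norm x" unfolding o0_def
      by (rule onorm[OF matrix_vector_mul_bounded_linear])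
    also have "norm ((\<sigma> ?y - \<sigma> 0) *v x) \<le> onorm (\<lambda>v. (\<sigma> ?y - \<sigma> 0) *v v) * norm x"
      by (rule onorm[OF matrix_vector_mul_bounded_linear])
    also have "\<dots> \<le> c * norm ?y * norm x"
      using sigL[of ?y 0] by (simp add: mult_right_mono)
    finally show ?thesis by (simp add: algebra_simps)
  qed
  have "(norm u)^2 = inner ?y (\<sigma> ?y *v u)" unfolding u_def
    by (simp add: power2_norm_eq_inner dot_lmul_matrix)
  also have "\<dots> \<le> norm ?y * norm (\<sigma> ?y *v u)" by (rule Cauchy_Schwarz_ineq2[THEN abs_le_D1])
  also have "\<dots> \<le> norm ?y * ((o0 + c * norm ?y) * norm u)" by (intro mult_left_mono Au) simp
  finally have "norm u * norm u \<le> (norm ?y * (o0 + c * norm ?y)) * norm u"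
    by (simp add: power2_eq_square mult_ac)
  then have un: "norm u \<le> norm ?y * (o0 + c * norm ?y)"
    by (cases "norm u = 0") (use o0 cpos in auto)
  have ypos: "0 < norm ?y" using True by linarith
  have "norm (vv k \<omega>) = norm u / (norm ?y)^2"
    using True by (simp add: vv_def Let_def u_def)
  also have "\<dots> \<le> norm ?y * (o0 + c * norm ?y) / (norm ?y)^2"
    by (intro divide_right_mono un) simp
  also have "\<dots> = o0 / norm ?y + c" using ypos by (simp add: field_simps power2_eq_square)
  also have "\<dots> \<le> o0 + c"
  proof -
    have "o0 \<le> o0 * norm ?y" using True o0 by (simp add: mult_le_cancel_left1)
    then have "o0 / norm ?y \<le> o0" using ypos by (simp add: divide_le_eq)
    then show ?thesis by simp
  qed
  finally show ?thesis unfolding K_def o0_def .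
qed

lemma vv_meas: "k \<le> N \<Longrightarrow> vv k \<in> borel_measurable (FF k)"
proof -
  assume k: "k \<le> N"
  have Ym: "Y k \<in> borel_measurable (FF k)" using Y_meas[OF k] .
  have sm: "(\<lambda>\<omega>. \<sigma> (Y k \<omega>)) \<in> borel_measurable (FF k)"
    using measurable_compose[OF Ym borel_measurable_continuous_onI[OF sig_cont]] by (simp add: comp_def)
  have um: "(\<lambda>\<omega>. Y k \<omega> v* \<sigma> (Y k \<omega>)) \<in> borel_measurable (FF k)"
    by (rule borel_measurable_continuous_Pair[OF Ym sm vm_cont])
  have nm: "(\<lambda>\<omega>. norm (Y k \<omega>)) \<in> borel_measurable (FF k)" using Ym by measurable
  have "(\<lambda>\<omega>. if 1 \<le> norm (Y k \<omega>) then (1 / (norm (Y k \<omega>))^2) *\<^sub>R (Y k \<omega> v* \<sigma> (Y k \<omega>)) else 0)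
      \<in> borel_measurable (FF k)"
    using um nm by measurable
  then show ?thesis by (simp add: vv_def[abs_def] Let_def)
qed

definition S :: "nat \<Rightarrow> 'a \<Rightarrow> real" where "S n \<omega> = (\<Sum>k<n. alpha T N \<mu> \<sigma> W \<xi> k \<omega>)"

lemma S_meas: "n \<le> N \<Longrightarrow> S n \<in> borel_measurable (FF n)"
proof -
  assume n: "n \<le> N"
  have "(\<lambda>\<omega>. inner (vv k \<omega>) (D k \<omega>)) \<in> borel_measurable (FF n)" if k: "k < n" for k
  proof -
    have "vv k \<in> borel_measurable (FF n)" using k n by (rule_tac FF_lift[OF _ _ vv_meas]) auto
    moreover have "D k \<in> borel_measurable (FF n)" using k n by (rule_tac FF_lift[OF _ _ D_meas]) auto
    ultimately show ?thesis by measurable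
  qed
  then show ?thesis unfolding S_def[abs_def] alpha_eq
    by (intro borel_measurable_sum) auto
qed

lemma S_Suc: "S (Suc n) \<omega> = S n \<omega> + inner (vv n \<omega>) (D n \<omega>)"
  unfolding S_def by (simp add: alpha_eq)

lemma BM_incr:
  assumes k: "k < N"
  shows "distributed M lborel (D k) (\<lambda>x. ennreal (\<Prod>i\<in>UNIV. normal_density 0 (sqrt (T / real N)) (x$i))) \<and>
    (\<forall>A\<in>sets (FF k). \<forall>B\<in>sets borel. measure M (A \<inter> (D k -` B \<inter> space M)) = measure M A * measure M (D k -` B \<inter> space M))"
proof -
  have "\<forall>s t. 0 \<le> s \<longrightarrow> s < t \<longrightarrow> t \<le> T \<longrightarrow>
        distributed M lborel (\<lambda>\<omega>. W t \<omega> - W s \<omega>)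
          (\<lambda>x. ennreal (\<Prod>i\<in>UNIV. normal_density 0 (sqrt (t - s)) (x $ i))) \<and>
        (\<forall>A\<in>sets (F s). \<forall>B\<in>sets borel.
           measure M (A \<inter> ((\<lambda>\<omega>. W t \<omega> - W s \<omega>) -` B \<inter> space M)) =
           measure M A * measure M ((\<lambda>\<omega>. W t \<omega> - W s \<omega>) -` B \<inter> space M))"
    using BM unfolding std_brownian_motion_def by (rule conjunct2[OF conjunct2[OF conjunct2]])
  from this[rule_format, OF tk_nonneg[of k] tk_less[of k] tk_le[of "Suc k"]] k
  show ?thesis unfolding D_eq FF_def tk_Suc by simp
qed

lemma key:
  assumes k: "k < N" and G: "G \<in> borel_measurable (FF k)" and w: "w \<in> borel_measurable (FF k)"
  shows "(\<integral>\<^sup>+\<omega>. G \<omega> * ennreal (exp (inner (w \<omega>) (D k \<omega>))) \<partial>M)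
       = (\<integral>\<^sup>+\<omega>. G \<omega> * ennreal (exp ((norm (w \<omega>))\<^sup>2 * (T / real N) / 2)) \<partial>M)"
proof -
  have s: "0 < sqrt (T / real N)" using Tpos Npos by simp
  have "(sqrt (T / real N))\<^sup>2 = T / real N" using Tpos by simp
  then show ?thesis
    using indep_exp[OF P _ _ conjunct1[OF BM_incr[OF k]] s conjunct2[OF BM_incr[OF k]] G w]
      FF_sub[of k] k by simp
qed

end



lemma Max_sq:
  fixes g :: "nat \<Rightarrow> real"
  assumes "finite A" "A \<noteq> {}" "\<And>x. x \<in> A \<Longrightarrow> 0 \<le> g x"
  shows "Max ((\<lambda>x. (g x)^2) ` A) = (Max (g ` A))^2"
proof -
  have "Max (g ` A) \<in> g ` A" using assms by (intro Max_in) auto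
  then obtain x0 where x0: "x0 \<in> A" "g x0 = Max (g ` A)" by auto
  show ?thesis
  proof (rule Max_eqI)
    show "finite ((\<lambda>x. (g x)^2) ` A)" using assms by simp
    show "(Max (g ` A))^2 \<in> (\<lambda>x. (g x)^2) ` A" using x0 by force
    fix y assume "y \<in> (\<lambda>x. (g x)^2) ` A"
    then obtain x where x: "x \<in> A" "y = (g x)^2" by auto
    have "g x \<le> Max (g ` A)" using x assms by (intro Max_ge) auto
    then show "y \<le> (Max (g ` A))^2" using x assms by (simp add: power_mono)
  qed
qed

lemma Max_sq_le_sum:
  fixes g :: "nat \<Rightarrow> real"
  assumes "\<And>x. 0 \<le> g x"
  shows "(Max (g ` {0..n}))^2 \<le> (\<Sum>j\<in>{0..n}. (g j)^2)"
proof -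
  have "Max (g ` {0..n}) \<in> g ` {0..n}" by (intro Max_in) auto
  then obtain x0 where x0: "x0 \<in> {0..n}" "g x0 = Max (g ` {0..n})" by (metis imageE)
  have "(g x0)^2 \<le> (\<Sum>j\<in>{0..n}. (g j)^2)"
    using x0 by (intro member_le_sum) auto
  then show ?thesis using x0 by simp
qed

context tam begin

interpretation prob_space M by (rule P)

lemma S_M: "n \<le> N \<Longrightarrow> S n \<in> borel_measurable M"
  by (rule FF_M[OF _ S_meas]) auto

lemma E1:
  fixes a :: real
  shows "n \<le> N \<Longrightarrow> (\<integral>\<^sup>+\<omega>. ennreal (exp (a * S n \<omega>)) \<partial>M) \<le> ennreal (exp (a^2 * K^2 * (T / real N) / 2 * real n))"
proof (induction n)
  case 0
  have "(\<integral>\<^sup>+\<omega>. ennreal (exp (a * S 0 \<omega>)) \<partial>M) = emeasure M (space M)"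
    by (simp add: S_def)
  then show ?case by (simp add: emeasure_space_1)
next
  case (Suc n)
  have n: "n < N" using Suc by simp
  let ?h = "T / real N"
  have Gm: "(\<lambda>\<omega>. ennreal (exp (a * S n \<omega>))) \<in> borel_measurable (FF n)"
    using S_meas[OF less_imp_le[OF n]] by measurable
  have wm: "(\<lambda>\<omega>. a *\<^sub>R vv n \<omega>) \<in> borel_measurable (FF n)"
    using vv_meas[OF less_imp_le[OF n]] by measurable
  have "(\<integral>\<^sup>+\<omega>. ennreal (exp (a * S (Suc n) \<omega>)) \<partial>M)
      = (\<integral>\<^sup>+\<omega>. ennreal (exp (a * S n \<omega>)) * ennreal (exp (inner (a *\<^sub>R vv n \<omega>) (D n \<omega>))) \<partial>M)"
    by (simp add: S_Suc distrib_left exp_add ennreal_mult')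
  also have "\<dots> = (\<integral>\<^sup>+\<omega>. ennreal (exp (a * S n \<omega>)) * ennreal (exp ((norm (a *\<^sub>R vv n \<omega>))\<^sup>2 * ?h / 2)) \<partial>M)"
    by (rule key[OF n Gm wm])
  also have "\<dots> \<le> (\<integral>\<^sup>+\<omega>. ennreal (exp (a * S n \<omega>)) * ennreal (exp (a^2 * K^2 * ?h / 2)) \<partial>M)"
  proof (intro nn_integral_mono mult_left_mono ennreal_leI)
    fix \<omega>
    have "(norm (a *\<^sub>R vv n \<omega>))\<^sup>2 = a^2 * (norm (vv n \<omega>))^2" by (simp add: power_mult_distrib)
    also have "\<dots> \<le> a^2 * K^2"
      using vv_bound[of n \<omega>] by (intro mult_left_mono power_mono) auto
    finally have "(norm (a *\<^sub>R vv n \<omega>))\<^sup>2 * ?h / 2 \<le> a^2 * K^2 * ?h / 2"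
      using Tpos by (intro divide_right_mono mult_right_mono) auto
    then show "exp ((norm (a *\<^sub>R vv n \<omega>))\<^sup>2 * ?h / 2) \<le> exp (a^2 * K^2 * ?h / 2)" by simp
  qed auto
  also have "\<dots> = (\<integral>\<^sup>+\<omega>. ennreal (exp (a * S n \<omega>)) \<partial>M) * ennreal (exp (a^2 * K^2 * ?h / 2))"
    using S_M[of n] n by (intro nn_integral_multc) auto
  also have "\<dots> \<le> ennreal (exp (a^2 * K^2 * ?h / 2 * real n)) * ennreal (exp (a^2 * K^2 * ?h / 2))"
    using Suc n by (intro mult_right_mono) auto
  also have "\<dots> = ennreal (exp (a^2 * K^2 * ?h / 2 * real (Suc n)))"
    by (simp add: ennreal_mult'[symmetric] exp_add[symmetric] algebra_simps add_divide_distrib)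
  finally show ?case .
qed

definition CC :: "real \<Rightarrow> real" where "CC a = exp (a^2 * K^2 * T / 2)"

lemma E1':
  fixes a :: real
  assumes "n \<le> N"
  shows "(\<integral>\<^sup>+\<omega>. ennreal (exp (a * S n \<omega>)) \<partial>M) \<le> ennreal (CC a)"
proof -
  have "a^2 * K^2 * (T / real N) / 2 * real n \<le> a^2 * K^2 * T / 2"
  proof -
    have "(T / real N) * real n \<le> T"
      using assms Tpos Npos by (simp add: divide_le_eq mult_left_mono) 
    then have "(a^2 * K^2 / 2) * ((T / real N) * real n) \<le> (a^2 * K^2 / 2) * T"
      by (intro mult_left_mono) auto
    then show ?thesis by (simp add: algebra_simps)
  qed
  then have "ennreal (exp (a^2 * K^2 * (T / real N) / 2 * real n)) \<le> ennreal (CC a)"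
    unfolding CC_def by (intro ennreal_leI) simp
  then show ?thesis using E1[OF assms, of a] by (rule_tac order_trans) auto
qed

lemma E2:
  fixes a :: real and g :: "'a \<Rightarrow> ennreal"
  assumes n: "n < N" and g: "g \<in> borel_measurable (FF n)"
  shows "(\<integral>\<^sup>+\<omega>. g \<omega> * ennreal (exp (a * S n \<omega>)) \<partial>M) \<le> (\<integral>\<^sup>+\<omega>. g \<omega> * ennreal (exp (a * S (Suc n) \<omega>)) \<partial>M)"
proof -
  let ?h = "T / real N"
  have Gm: "(\<lambda>\<omega>. g \<omega> * ennreal (exp (a * S n \<omega>))) \<in> borel_measurable (FF n)"
    using S_meas[OF less_imp_le[OF n]] g by measurable
  have wm: "(\<lambda>\<omega>. a *\<^sub>R vv n \<omega>) \<in> borel_measurable (FF n)"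
    using vv_meas[OF less_imp_le[OF n]] by measurable
  have "(\<integral>\<^sup>+\<omega>. g \<omega> * ennreal (exp (a * S n \<omega>)) \<partial>M)
     \<le> (\<integral>\<^sup>+\<omega>. g \<omega> * ennreal (exp (a * S n \<omega>)) * ennreal (exp ((norm (a *\<^sub>R vv n \<omega>))\<^sup>2 * ?h / 2)) \<partial>M)"
  proof (rule nn_integral_mono)
    fix \<omega>
    have "1 \<le> exp ((norm (a *\<^sub>R vv n \<omega>))\<^sup>2 * ?h / 2)" using Tpos by simp
    then have "1 \<le> ennreal (exp ((norm (a *\<^sub>R vv n \<omega>))\<^sup>2 * ?h / 2))" by (simp add: ennreal_leI)
    then show "g \<omega> * ennreal (exp (a * S n \<omega>)) \<le> g \<omega> * ennreal (exp (a * S n \<omega>)) * ennreal (exp ((norm (a *\<^sub>R vv n \<omega>))\<^sup>2 * ?h / 2))"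
      using mult_left_mono[of 1 _ "g \<omega> * ennreal (exp (a * S n \<omega>))"] by simp
  qed
  also have "\<dots> = (\<integral>\<^sup>+\<omega>. g \<omega> * ennreal (exp (a * S n \<omega>)) * ennreal (exp (inner (a *\<^sub>R vv n \<omega>) (D n \<omega>))) \<partial>M)"
    by (rule key[OF n Gm wm, symmetric])
  also have "\<dots> = (\<integral>\<^sup>+\<omega>. g \<omega> * ennreal (exp (a * S (Suc n) \<omega>)) \<partial>M)"
    by (simp add: S_Suc distrib_left exp_add ennreal_mult' mult.assoc)
  finally show ?thesis .
qed

end



context tam begin

interpretation prob_space M by (rule P)

lemma bound_N:
  fixes a :: real
  shows "(\<integral>\<^sup>+\<omega>. ennreal (Max ((\<lambda>n. exp (a * (\<Sum>k<n. alpha T N \<mu> \<sigma> W \<xi> k \<omega>))) ` {0..N})) \<partial>M)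
    \<le> 4 * ennreal (CC a)"
proof -
  define Ys where "Ys j \<omega> = exp (a / 2 * S j \<omega>)" for j \<omega>
  define m where "m k \<omega> = Max ((\<lambda>j. Ys j \<omega>) ` {0..k})" for k \<omega>
  have Ys_nn: "0 \<le> Ys j \<omega>" for j \<omega> unfolding Ys_def by simp
  have m_nn: "0 \<le> m k \<omega>" for k \<omega>
    unfolding m_def using Ys_nn by (rule_tac order_trans[OF _ Max_ge_elem[of 0 k]]) auto
  have Ys_sq: "(Ys j \<omega>)^2 = exp (a * S j \<omega>)" for j \<omega>
    unfolding Ys_def by (simp add: power2_eq_square exp_add[symmetric])
  have Ys_meas: "j \<le> k \<Longrightarrow> k \<le> N \<Longrightarrow> Ys j \<in> borel_measurable (FF k)" for j k
  proof -
    assume jk: "j \<le> k" "k \<le> N"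
    have "S j \<in> borel_measurable (FF j)" using jk by (intro S_meas) simp
    then have "Ys j \<in> borel_measurable (FF j)" unfolding Ys_def[abs_def] by measurable
    then show ?thesis using jk by (rule_tac FF_lift[of j k]) auto
  qed
  have m_meas: "k \<le> N \<Longrightarrow> m k \<in> borel_measurable (FF k)" for k
    unfolding m_def[abs_def] by (intro borel_measurable_Max) (auto intro: Ys_meas)
  have Ys_M: "j \<le> N \<Longrightarrow> Ys j \<in> borel_measurable M" for j
    by (rule FF_M[OF _ Ys_meas[OF order_refl]]) auto
  have m_M: "k \<le> N \<Longrightarrow> m k \<in> borel_measurable M" for k
    by (rule FF_M[OF _ m_meas]) auto
  have integrand: "Max ((\<lambda>n. exp (a * (\<Sum>k<n. alpha T N \<mu> \<sigma> W \<xi> k \<omega>))) ` {0..N}) = (m N \<omega>)^2" for \<omega>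
  proof -
    have "Max ((\<lambda>n. exp (a * (\<Sum>k<n. alpha T N \<mu> \<sigma> W \<xi> k \<omega>))) ` {0..N})
        = Max ((\<lambda>n. (Ys n \<omega>)^2) ` {0..N})"
      by (simp add: Ys_sq S_def)
    also have "\<dots> = (m N \<omega>)^2" unfolding m_def by (rule Max_sq) (auto simp: Ys_nn)
    finally show ?thesis .
  qed
  have pw: "ennreal ((m N \<omega>)^2) + 4 * (\<Sum>k<N. ennreal (m k \<omega> * Ys (Suc k) \<omega>))
      \<le> 4 * ennreal ((Ys N \<omega>)^2) + 4 * (\<Sum>k<N. ennreal (m k \<omega> * Ys k \<omega>))" for \<omega>
  proof -
    have r: "(m N \<omega>)^2 + 4 * (\<Sum>k<N. m k \<omega> * Ys (Suc k) \<omega>) \<le> 4 * (Ys N \<omega>)^2 + 4 * (\<Sum>k<N. m k \<omega> * Ys k \<omega>)"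
      unfolding m_def by (rule doob_det) (simp add: Ys_nn)
    have s1: "0 \<le> (\<Sum>k<N. m k \<omega> * Ys (Suc k) \<omega>)" using m_nn Ys_nn by (simp add: sum_nonneg)
    have s2: "0 \<le> (\<Sum>k<N. m k \<omega> * Ys k \<omega>)" using m_nn Ys_nn by (simp add: sum_nonneg)
    have "ennreal ((m N \<omega>)^2 + 4 * (\<Sum>k<N. m k \<omega> * Ys (Suc k) \<omega>))
        \<le> ennreal (4 * (Ys N \<omega>)^2 + 4 * (\<Sum>k<N. m k \<omega> * Ys k \<omega>))"
      using r by (rule ennreal_leI)
    then show ?thesis using s1 s2 m_nn Ys_nn
      by (simp add: ennreal_plus ennreal_mult sum_ennreal[symmetric] sum_nonneg del: sum_ennreal)
  qed
  define A where "A = (\<integral>\<^sup>+\<omega>. ennreal ((m N \<omega>)^2) \<partial>M)"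
  define B where "B = (\<Sum>k<N. \<integral>\<^sup>+\<omega>. ennreal (m k \<omega> * Ys (Suc k) \<omega>) \<partial>M)"
  define C2 where "C2 = (\<integral>\<^sup>+\<omega>. ennreal ((Ys N \<omega>)^2) \<partial>M)"
  define Dd where "Dd = (\<Sum>k<N. \<integral>\<^sup>+\<omega>. ennreal (m k \<omega> * Ys k \<omega>) \<partial>M)"
  have mY1: "(\<lambda>\<omega>. ennreal (m k \<omega> * Ys (Suc k) \<omega>)) \<in> borel_measurable M" if "k < N" for k
  proof -
    have "m k \<in> borel_measurable M" "Ys (Suc k) \<in> borel_measurable M" using that m_M Ys_M by auto
    then show ?thesis by measurable
  qed
  have mY0: "(\<lambda>\<omega>. ennreal (m k \<omega> * Ys k \<omega>)) \<in> borel_measurable M" if "k < N" for k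
  proof -
    have "m k \<in> borel_measurable M" "Ys k \<in> borel_measurable M" using that m_M Ys_M by auto
    then show ?thesis by measurable
  qed
  have mN: "(\<lambda>\<omega>. ennreal ((m N \<omega>)^2)) \<in> borel_measurable M" using m_M[of N] by measurable
  have YN: "(\<lambda>\<omega>. ennreal ((Ys N \<omega>)^2)) \<in> borel_measurable M" using Ys_M[of N] by measurable
  have s1: "(\<integral>\<^sup>+\<omega>. (\<Sum>k<N. ennreal (m k \<omega> * Ys (Suc k) \<omega>)) \<partial>M) = B"
    unfolding B_def by (rule nn_integral_sum) (use mY1 in auto)
  have s0: "(\<integral>\<^sup>+\<omega>. (\<Sum>k<N. ennreal (m k \<omega> * Ys k \<omega>)) \<partial>M) = Dd"
    unfolding Dd_def by (rule nn_integral_sum) (use mY0 in auto)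
  have sm1: "(\<lambda>\<omega>. (\<Sum>k<N. ennreal (m k \<omega> * Ys (Suc k) \<omega>))) \<in> borel_measurable M"
    by (rule borel_measurable_sum) (use mY1 in auto)
  have sm0: "(\<lambda>\<omega>. (\<Sum>k<N. ennreal (m k \<omega> * Ys k \<omega>))) \<in> borel_measurable M"
    by (rule borel_measurable_sum) (use mY0 in auto)
  have AB: "A + 4 * B \<le> 4 * C2 + 4 * Dd"
  proof -
    have "A + 4 * B = (\<integral>\<^sup>+\<omega>. ennreal ((m N \<omega>)^2) + 4 * (\<Sum>k<N. ennreal (m k \<omega> * Ys (Suc k) \<omega>)) \<partial>M)"
      unfolding A_def s1[symmetric] using mN sm1
      by (simp add: nn_integral_add nn_integral_cmult)
    also have "\<dots> \<le> (\<integral>\<^sup>+\<omega>. 4 * ennreal ((Ys N \<omega>)^2) + 4 * (\<Sum>k<N. ennreal (m k \<omega> * Ys k \<omega>)) \<partial>M)"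
      by (rule nn_integral_mono) (rule pw)
    also have "\<dots> = 4 * C2 + 4 * Dd"
      unfolding C2_def s0[symmetric] using YN sm0
      by (simp add: nn_integral_add nn_integral_cmult)
    finally show ?thesis .
  qed
  have DB: "Dd \<le> B"
    unfolding Dd_def B_def
  proof (rule sum_mono)
    fix k assume k: "k \<in> {..<N}"
    have "m k \<in> borel_measurable (FF k)" using m_meas k by auto
    then have g: "(\<lambda>\<omega>. ennreal (m k \<omega>)) \<in> borel_measurable (FF k)" by measurable
    have "(\<integral>\<^sup>+\<omega>. ennreal (m k \<omega>) * ennreal (exp (a / 2 * S k \<omega>)) \<partial>M)
        \<le> (\<integral>\<^sup>+\<omega>. ennreal (m k \<omega>) * ennreal (exp (a / 2 * S (Suc k) \<omega>)) \<partial>M)"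
      using k by (intro E2 g) auto
    then show "(\<integral>\<^sup>+\<omega>. ennreal (m k \<omega> * Ys k \<omega>) \<partial>M) \<le> (\<integral>\<^sup>+\<omega>. ennreal (m k \<omega> * Ys (Suc k) \<omega>) \<partial>M)"
      using m_nn by (simp add: Ys_def ennreal_mult)
  qed
  have Bfin0: "\<forall>k\<in>{..<N}. (\<integral>\<^sup>+\<omega>. ennreal (m k \<omega> * Ys (Suc k) \<omega>) \<partial>M) < top"
  proof (intro ballI)
    fix k assume k: "k \<in> {..<N}"
    have pwk: "ennreal (m k \<omega> * Ys (Suc k) \<omega>) \<le> (\<Sum>j\<in>{0..Suc k}. ennreal (exp (a * S j \<omega>)))" for \<omega>
    proof -
      have "m k \<omega> \<le> m (Suc k) \<omega>" unfolding m_def by (simp add: Max_Suc_atMost)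
      moreover have "Ys (Suc k) \<omega> \<le> m (Suc k) \<omega>" unfolding m_def by (rule Max_ge_elem) simp
      ultimately have "m k \<omega> * Ys (Suc k) \<omega> \<le> (m (Suc k) \<omega>)^2"
        using m_nn Ys_nn by (simp add: power2_eq_square mult_mono)
      also have "\<dots> \<le> (\<Sum>j\<in>{0..Suc k}. (Ys j \<omega>)^2)" unfolding m_def
        by (rule Max_sq_le_sum) (simp add: Ys_nn)
      finally have "m k \<omega> * Ys (Suc k) \<omega> \<le> (\<Sum>j\<in>{0..Suc k}. exp (a * S j \<omega>))"
        unfolding Ys_sq .
      then have "ennreal (m k \<omega> * Ys (Suc k) \<omega>) \<le> ennreal (\<Sum>j\<in>{0..Suc k}. exp (a * S j \<omega>))"
        by (rule ennreal_leI)
      also have "\<dots> = (\<Sum>j\<in>{0..Suc k}. ennreal (exp (a * S j \<omega>)))"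
        by (rule sum_ennreal[symmetric]) simp
      finally show ?thesis .
    qed
    have "(\<integral>\<^sup>+\<omega>. ennreal (m k \<omega> * Ys (Suc k) \<omega>) \<partial>M) \<le> (\<integral>\<^sup>+\<omega>. (\<Sum>j\<in>{0..Suc k}. ennreal (exp (a * S j \<omega>))) \<partial>M)"
      by (rule nn_integral_mono) (rule pwk)
    also have "\<dots> = (\<Sum>j\<in>{0..Suc k}. \<integral>\<^sup>+\<omega>. ennreal (exp (a * S j \<omega>)) \<partial>M)"
    proof (rule nn_integral_sum)
      fix j assume "j \<in> {0..Suc k}"
      then have "S j \<in> borel_measurable M" using k by (intro S_M) auto
      then show "(\<lambda>\<omega>. ennreal (exp (a * S j \<omega>))) \<in> borel_measurable M" by measurable
    qed
    also have "\<dots> \<le> (\<Sum>j\<in>{0..Suc k}. ennreal (CC a))"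
      using k by (intro sum_mono E1') auto
    also have "\<dots> < \<infinity>" by (simp add: ennreal_mult_less_top of_nat_less_top)
    finally show "(\<integral>\<^sup>+\<omega>. ennreal (m k \<omega> * Ys (Suc k) \<omega>) \<partial>M) < top" by simp
  qed
  have Bfin: "B < \<infinity>" unfolding B_def infinity_ennreal_def
    using Bfin0 by (subst ennreal_sum_less_top) auto
  have C2le: "C2 \<le> ennreal (CC a)"
    unfolding C2_def Ys_sq by (rule E1') simp
  have "4 * Dd \<le> 4 * B" by (rule mult_left_mono[OF DB]) simp
  then have "4 * C2 + 4 * Dd \<le> 4 * C2 + 4 * B" by (rule add_left_mono)
  with AB have "A + 4 * B \<le> 4 * C2 + 4 * B" by (rule order_trans)
  then have le2: "4 * B + A \<le> 4 * B + 4 * C2" by (simp add: add.commute)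
  have B4: "4 * B \<noteq> \<infinity>" using Bfin by (simp add: ennreal_mult_eq_top_iff)
  have "A \<le> 4 * C2" using le2 B4 ennreal_add_left_cancel_le by blast
  also have "\<dots> \<le> 4 * ennreal (CC a)" using C2le by (rule mult_left_mono) simp
  finally have "A \<le> 4 * ennreal (CC a)" .
  then show ?thesis unfolding A_def integrand .
qed

end



theorem lemma3p4:
  fixes M :: "'a measure" and T c :: real and F :: "real \<Rightarrow> 'a measure"
    and W :: "real \<Rightarrow> 'a \<Rightarrow> real^'m::finite" and \<xi> :: "'a \<Rightarrow> real^'d::finite"
    and \<mu> :: "real^'d \<Rightarrow> real^'d" and \<mu>' :: "real^'d \<Rightarrow> ((real^'d) \<Rightarrow>\<^sub>L (real^'d))"
    and \<sigma> :: "real^'d \<Rightarrow> real^'m^'d" and p :: real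
  assumes "prob_space M" and "0 < T"
    and "normal_filtration M T F"
    and "std_brownian_motion M T F W"
    and "\<xi> \<in> borel_measurable (F 0)"
    and "\<And>q::nat. integrable M (\<lambda>\<omega>. norm (\<xi> \<omega>) ^ q)"
    and "\<And>x. (\<mu> has_derivative blinfun_apply (\<mu>' x)) (at x)"
    and "continuous_on UNIV \<mu>'"
    and "0 < c"
    and "\<And>x. norm (\<mu>' x) \<le> c * (1 + norm x powr c)"
    and "\<And>x y. onorm (\<lambda>v. (\<sigma> x - \<sigma> y) *v v) \<le> c * norm (x - y)"
    and "\<And>x y. inner (x - y) (\<mu> x - \<mu> y) \<le> c * (norm (x - y))\<^sup>2"
    and "1 \<le> p"
  shows "(SUP z\<in>{-1, 1::real}. SUP N::nat.
           \<integral>\<^sup>+ \<omega>. ennreal (Max ((\<lambda>n. exp (p * z * (\<Sum>k<n. alpha T N \<mu> \<sigma> W \<xi> k \<omega>))) ` {0..N})) \<partial>M)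
         < \<infinity>"
proof -
  interpret prob_space M by fact
  define K0 where "K0 = onorm (\<lambda>v. \<sigma> 0 *v v) + c"
  define Bd where "Bd = 4 * exp (p^2 * K0^2 * T / 2) + 1"
  have each: "(\<integral>\<^sup>+ \<omega>. ennreal (Max ((\<lambda>n. exp (p * z * (\<Sum>k<n. alpha T N \<mu> \<sigma> W \<xi> k \<omega>))) ` {0..N})) \<partial>M)
      \<le> ennreal Bd" if z: "z \<in> {-1, 1}" for z N
  proof (cases "N = 0")
    case True
    then have "(\<integral>\<^sup>+ \<omega>. ennreal (Max ((\<lambda>n. exp (p * z * (\<Sum>k<n. alpha T N \<mu> \<sigma> W \<xi> k \<omega>))) ` {0..N})) \<partial>M)
        = emeasure M (space M)" by simp
    also have "\<dots> = ennreal 1" by (simp add: emeasure_space_1)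
    also have "\<dots> \<le> ennreal Bd" unfolding Bd_def by (intro ennreal_leI) simp
    finally show ?thesis .
  next
    case False
    interpret tam M T c F W \<xi> \<mu> \<mu>' \<sigma> N
      by unfold_locales (use assms False in auto)
    have "(\<integral>\<^sup>+ \<omega>. ennreal (Max ((\<lambda>n. exp (p * z * (\<Sum>k<n. alpha T N \<mu> \<sigma> W \<xi> k \<omega>))) ` {0..N})) \<partial>M)
        \<le> 4 * ennreal (CC (p * z))" by (rule bound_N)
    also have "CC (p * z) = exp (p^2 * K0^2 * T / 2)"
      using z unfolding CC_def K_def K0_def by (auto simp: power_mult_distrib)
    also have "4 * ennreal (exp (p^2 * K0^2 * T / 2)) \<le> ennreal Bd"
    proof -
      have "4 * ennreal (exp (p^2 * K0^2 * T / 2)) = ennreal (4 * exp (p^2 * K0^2 * T / 2))"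
        by (simp add: ennreal_mult)
      also have "\<dots> \<le> ennreal Bd" unfolding Bd_def by (rule ennreal_leI) simp
      finally show ?thesis .
    qed
    finally show ?thesis .
  qed
  have "(SUP z\<in>{-1, 1::real}. SUP N::nat.
           \<integral>\<^sup>+ \<omega>. ennreal (Max ((\<lambda>n. exp (p * z * (\<Sum>k<n. alpha T N \<mu> \<sigma> W \<xi> k \<omega>))) ` {0..N})) \<partial>M)
        \<le> ennreal Bd"
    by (intro SUP_least each)
  also have "\<dots> < \<infinity>" by simp
  finally show ?thesis .
qed


end
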